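(* For every $n\ge3$: - the number of pairs $(T,\{\ell_1,\ell_2\})$, with $T$ a plane tree on $n$ vertices and $\{\ell_1,\ell_2\}$ an unordered pair of distinct leaves of $T$, is $\frac{(2n-5)!}{((n-3)!)^2}$; - the sum of $d(\ell_1,\ell_2)$ over all such pairs is $(n-2)4^{n-3}+\frac{(2n-5)!}{((n-3)!)^2}$.
   Context: General (plane) trees are rooted trees in which each vertex may have any number of children, linearly ordered. The size of a tree is its number of vertices. A leaf is a vertex with no children; in particular the root of a tree with at least two vertices is not a leaf. $d(u,w)$ is the number of edges of the path between $u$ and $w$. *)

theory Defs
  imports Complex_Main
begin

datatype ptree = Node "ptree list"

fun pt_size :: "ptree \<Rightarrow> nat" where
  "pt_size (Node ts) = Suc (sum_list (map pt_size ts))"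

text \<open>Vertices are addressed by their path from the root (list of child indices).
  is_leaf T p: the vertex at path p exists and has no children.\<close>
inductive is_leaf :: "ptree \<Rightarrow> nat list \<Rightarrow> bool" where
  leaf_root: "is_leaf (Node []) []"
| leaf_child: "i < length ts \<Longrightarrow> is_leaf (ts ! i) p \<Longrightarrow> is_leaf (Node ts) (i # p)"

text \<open>Length of the longest common prefix of two paths (= depth of the lowest common ancestor).\<close>
fun lcp_len :: "nat list \<Rightarrow> nat list \<Rightarrow> nat" where
  "lcp_len (x # xs) (y # ys) = (if x = y then Suc (lcp_len xs ys) else 0)"
| "lcp_len _ _ = 0"

definition pdist :: "nat list \<Rightarrow> nat list \<Rightarrow> nat" where
  "pdist p q = length p + length q - 2 * lcp_len p q"

definition leaf_pairs :: "nat \<Rightarrow> (ptree \<times> nat list set) set" where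
  "leaf_pairs n = {(T, {p, q}) | T p q. pt_size T = n \<and> is_leaf T p \<and> is_leaf T q \<and> p \<noteq> q}"

definition pair_dist :: "nat list set \<Rightarrow> nat" where
  "pair_dist L = (THE d. \<exists>p q. L = {p, q} \<and> d = pdist p q)"

end

theory Submission
  imports Defs "HOL-Computational_Algebra.Formal_Power_Series"
begin


definition trees :: "nat \<Rightarrow> ptree set" where "trees n = {t. pt_size t = n}"
definition forests :: "nat \<Rightarrow> ptree list set" where
  "forests n = {ts. sum_list (map pt_size ts) = n}"

lemma pt_size_pos: "pt_size t > 0" by (cases t) auto

lemma trees_0: "trees 0 = {}" using pt_size_pos by (auto simp: trees_def)

lemma forests_0: "forests 0 = {[]}"
proof -
  have "sum_list (map pt_size ts) = 0 \<Longrightarrow> ts = []" for ts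
    using pt_size_pos[of "hd ts"] by (cases ts) auto
  then show ?thesis by (auto simp: forests_def)
qed

lemma trees_Suc: "trees (Suc m) = Node ` forests m"
proof -
  have "t \<in> Node ` forests m" if "pt_size t = Suc m" for t
    using that by (cases t) (auto simp: forests_def)
  then show ?thesis by (auto simp: trees_def forests_def)
qed

lemma nil_notin_forests: "n > 0 \<Longrightarrow> [] \<notin> forests n" by (auto simp: forests_def)

lemma forests_nonempty:
  "{fs \<in> forests n. fs \<noteq> []} = (\<lambda>(t,ts). t#ts) ` (SIGMA t:(\<Union>k\<in>{..n}. trees k). forests (n - pt_size t))"
  apply (auto simp: forests_def trees_def image_iff neq_Nil_conv)
  done

lemma finite_trees_forests: "finite (trees n) \<and> finite (forests n)"
proof (induction n rule: less_induct)
  case (less n)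
  show ?case
  proof (cases n)
    case 0 then show ?thesis by (simp add: trees_0 forests_0)
  next
    case (Suc m)
    have ft: "finite (trees n)" using less[of m] Suc by (simp add: trees_Suc)
    have fk: "finite (trees k)" if "k \<le> n" for k
      using that less[of k] ft by (cases "k = n") auto
    have "finite (SIGMA t:(\<Union>k\<in>{..n}. trees k). forests (n - pt_size t))"
    proof (rule finite_SigmaI)
      show "finite (\<Union>k\<in>{..n}. trees k)" using fk by auto
      fix t assume "t \<in> (\<Union>k\<in>{..n}. trees k)"
      then show "finite (forests (n - pt_size t))"
        using less[of "n - pt_size t"] pt_size_pos[of t] Suc by auto
    qed
    then have "finite {fs \<in> forests n. fs \<noteq> []}" by (simp add: forests_nonempty)
    moreover have "forests n = {fs \<in> forests n. fs \<noteq> []}"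
      using nil_notin_forests[of n] Suc by auto
    ultimately show ?thesis using ft by simp
  qed
qed

lemma finite_trees: "finite (trees n)" and finite_forests: "finite (forests n)"
  using finite_trees_forests by auto



definition Fg :: "(ptree list \<Rightarrow> real) \<Rightarrow> real fps" where
  "Fg f = Abs_fps (\<lambda>n. \<Sum>fs\<in>forests n. f fs)"
definition Tg :: "(ptree \<Rightarrow> real) \<Rightarrow> real fps" where
  "Tg f = Abs_fps (\<lambda>n. \<Sum>t\<in>trees n. f t)"

lemma forest_sum:
  "(\<Sum>fs\<in>forests n. (case fs of [] \<Rightarrow> c | t#ts \<Rightarrow> \<psi> t ts)) =
     (if n = 0 then c else 0) + (\<Sum>k\<le>n. \<Sum>t\<in>trees k. \<Sum>ts\<in>forests (n-k). \<psi> t ts)"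
proof -
  let ?g = "\<lambda>fs. (case fs of [] \<Rightarrow> c | t#ts \<Rightarrow> \<psi> t ts)"
  let ?S = "SIGMA t:(\<Union>k\<in>{..n}. trees k). forests (n - pt_size t)"
  have fin: "finite (forests n)" by (rule finite_forests)
  have split: "(\<Sum>fs\<in>forests n. ?g fs) = (\<Sum>fs\<in>{fs\<in>forests n. fs = []}. ?g fs) + (\<Sum>fs\<in>{fs\<in>forests n. fs \<noteq> []}. ?g fs)"
    using fin by (subst sum.union_disjoint[symmetric]) (auto intro: sum.cong)
  have 1: "(\<Sum>fs\<in>{fs\<in>forests n. fs = []}. ?g fs) = (if n = 0 then c else 0)"
  proof (cases "n = 0")
    case True
    then have "{fs\<in>forests n. fs = []} = {[]}" by (auto simp: forests_0)
    then show ?thesis using True by simp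
  next
    case False
    then have e: "{fs\<in>forests n. fs = []} = {}" using nil_notin_forests by auto
    show ?thesis using False by (simp only: e) simp
  qed
  have inj: "inj_on (\<lambda>(t,ts). t#ts) ?S" by (auto simp: inj_on_def)
  have "(\<Sum>fs\<in>{fs\<in>forests n. fs \<noteq> []}. ?g fs) = (\<Sum>x\<in>?S. ?g ((\<lambda>(t,ts). t#ts) x))"
    unfolding forests_nonempty by (simp only: sum.reindex[OF inj] o_def)
  also have "\<dots> = (\<Sum>(t,ts)\<in>?S. \<psi> t ts)" by (intro sum.cong) auto
  also have "\<dots> = (\<Sum>t\<in>(\<Union>k\<in>{..n}. trees k). \<Sum>ts\<in>forests (n - pt_size t). \<psi> t ts)"
    by (rule sum.Sigma[symmetric]) (auto simp: finite_trees finite_forests)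
  also have "\<dots> = (\<Sum>k\<le>n. \<Sum>t\<in>trees k. \<Sum>ts\<in>forests (n - pt_size t). \<psi> t ts)"
    by (subst sum.UNION_disjoint) (auto simp: finite_trees finite_trees[unfolded trees_def] trees_def)
  also have "\<dots> = (\<Sum>k\<le>n. \<Sum>t\<in>trees k. \<Sum>ts\<in>forests (n-k). \<psi> t ts)"
    by (intro sum.cong) (auto simp: trees_def)
  finally show ?thesis using split 1 by simp
qed

lemma Fg_conv:
  "Fg (\<lambda>fs. case fs of [] \<Rightarrow> c | t#ts \<Rightarrow> a t * b ts) = fps_const c + Tg a * Fg b"
proof (rule fps_ext)
  fix n
  have "fps_nth (Fg (\<lambda>fs. case fs of [] \<Rightarrow> c | t#ts \<Rightarrow> a t * b ts)) n =
     (if n = 0 then c else 0) + (\<Sum>k\<le>n. \<Sum>t\<in>trees k. \<Sum>ts\<in>forests (n-k). a t * b ts)"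
    unfolding Fg_def by (simp add: forest_sum)
  also have "(\<Sum>k\<le>n. \<Sum>t\<in>trees k. \<Sum>ts\<in>forests (n-k). a t * b ts) = fps_nth (Tg a * Fg b) n"
    by (simp add: fps_mult_nth Tg_def Fg_def atLeast0AtMost sum_product)
  finally show "fps_nth (Fg (\<lambda>fs. case fs of [] \<Rightarrow> c | t#ts \<Rightarrow> a t * b ts)) n = fps_nth (fps_const c + Tg a * Fg b) n"
    by simp
qed

lemma Fg_add: "Fg (\<lambda>x. f x + g x) = Fg f + Fg g"
  by (rule fps_ext) (simp add: Fg_def sum.distrib)
lemma Fg_cmult: "Fg (\<lambda>x. c * f x) = fps_const c * Fg f"
  by (rule fps_ext) (simp add: Fg_def sum_distrib_left)

lemma Tg_Node: "Tg f = fps_X * Fg (\<lambda>cs. f (Node cs))"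
proof (rule fps_ext)
  fix n show "fps_nth (Tg f) n = fps_nth (fps_X * Fg (\<lambda>cs. f (Node cs))) n"
  proof (cases n)
    case 0 then show ?thesis by (simp add: Tg_def trees_0)
  next
    case (Suc m)
    have "inj Node" by (auto simp: inj_def)
    then show ?thesis using Suc by (simp add: Tg_def Fg_def trees_Suc sum.reindex inj_on_def)
  qed
qed

lemma Fg_nil: "Fg (\<lambda>cs. if cs = [] then c else 0) = fps_const c"
proof (rule fps_ext)
  fix n show "fps_nth (Fg (\<lambda>cs. if cs = [] then c else 0)) n = fps_nth (fps_const c) n"
  proof (cases n)
    case 0 then show ?thesis by (simp add: Fg_def forests_0)
  next
    case (Suc m)
    then have "(\<Sum>cs\<in>forests n. if cs = [] then c else 0) = 0"
      using nil_notin_forests[of n] by (intro sum.neutral) auto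
    then show ?thesis using Suc by (simp add: Fg_def)
  qed
qed

lemma Tg_0: "fps_nth (Tg f) 0 = 0" by (simp add: Tg_def trees_0)



definition TL :: "ptree \<Rightarrow> nat list set" where "TL t = {p. is_leaf t p}"
definition FL :: "ptree list \<Rightarrow> nat list set" where
  "FL ts = {i#p | i p. i < length ts \<and> is_leaf (ts!i) p}"
definition sh :: "nat list \<Rightarrow> nat list" where "sh p = Suc (hd p) # tl p"

lemma TL_Node: "TL (Node cs) = (if cs = [] then {[]} else FL cs)"
  by (auto simp: TL_def FL_def is_leaf.simps[of "Node cs"])

lemma FL_Union: "FL ts = (\<Union>i<length ts. Cons i ` TL (ts!i))"
  by (auto simp: FL_def TL_def)

lemma finite_TL: "finite (TL t)"
proof (induction t)
  case (Node cs)
  then show ?case by (auto simp: TL_Node FL_Union)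
qed

lemma finite_FL: "finite (FL ts)"
  by (auto simp: FL_Union finite_TL)

lemma FL_nonempty: "p \<in> FL ts \<Longrightarrow> p \<noteq> []" by (auto simp: FL_def)

lemma FL_Nil: "FL [] = {}" by (auto simp: FL_def)

lemma FL_Cons: "FL (t#ts) = Cons 0 ` TL t \<union> sh ` FL ts"
proof (intro set_eqI iffI)
  fix x assume "x \<in> FL (t#ts)"
  then obtain i p where x: "x = i#p" "i < Suc (length ts)" "is_leaf ((t#ts)!i) p"
    by (auto simp: FL_def)
  show "x \<in> Cons 0 ` TL t \<union> sh ` FL ts"
  proof (cases i)
    case 0 then show ?thesis using x by (auto simp: TL_def)
  next
    case (Suc j)
    then have "j#p \<in> FL ts" using x by (auto simp: FL_def)
    moreover have "x = sh (j#p)" using x Suc by (simp add: sh_def)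
    ultimately show ?thesis by blast
  qed
next
  fix x assume "x \<in> Cons 0 ` TL t \<union> sh ` FL ts"
  then show "x \<in> FL (t#ts)"
  proof
    assume "x \<in> Cons 0 ` TL t"
    then show ?thesis by (force simp: TL_def FL_def)
  next
    assume "x \<in> sh ` FL ts"
    then obtain i p where "x = Suc i # p" "i < length ts" "is_leaf (ts!i) p"
      by (auto simp: FL_def sh_def)
    then show ?thesis unfolding FL_def by force
  qed
qed

lemma disj: "Cons 0 ` A \<inter> sh ` B = {}" by (auto simp: sh_def)
lemma inj_sh: "inj_on sh (FL ts)"
  by (auto simp: inj_on_def sh_def FL_def)
lemma length_sh: "p \<noteq> [] \<Longrightarrow> length (sh p) = length p" by (cases p) (auto simp: sh_def)

lemma lcp_len_sym: "lcp_len p q = lcp_len q p"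
  by (induction p q rule: lcp_len.induct) auto
lemma pdist_sym: "pdist p q = pdist q p"
  by (simp add: pdist_def lcp_len_sym)
lemma lcp_le: "lcp_len p q \<le> length p"
  by (induction p q rule: lcp_len.induct) auto
lemma pdist_self: "pdist p p = 0"
  by (induction p) (auto simp: pdist_def)

lemma pd1: "pdist (0#p) (0#q) = pdist p q"
  using lcp_le[of p q] lcp_le[of q p] lcp_len_sym[of p q] by (simp add: pdist_def)
lemma pd2: "p \<noteq> [] \<Longrightarrow> q \<noteq> [] \<Longrightarrow> pdist (sh p) (sh q) = pdist p q"
  by (cases p; cases q) (auto simp: pdist_def sh_def)
lemma pd3: "pdist (0#p) (sh q) = Suc (length p) + length (sh q)"
  by (simp add: pdist_def sh_def)
lemma pd4: "pdist (sh q) (0#p) = Suc (length p) + length (sh q)"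
  by (simp add: pdist_def sh_def)

definition tA :: "ptree \<Rightarrow> nat" where "tA t = card (TL t)"
definition fA :: "ptree list \<Rightarrow> nat" where "fA ts = card (FL ts)"
definition tH :: "ptree \<Rightarrow> nat" where "tH t = (\<Sum>p\<in>TL t. length p)"
definition fH :: "ptree list \<Rightarrow> nat" where "fH ts = (\<Sum>p\<in>FL ts. length p)"
definition tW :: "ptree \<Rightarrow> nat" where "tW t = (\<Sum>p\<in>TL t. \<Sum>q\<in>TL t. pdist p q)"
definition fW :: "ptree list \<Rightarrow> nat" where "fW ts = (\<Sum>p\<in>FL ts. \<Sum>q\<in>FL ts. pdist p q)"

lemma tA_Node: "tA (Node cs) = (if cs = [] then 1 else fA cs)"
  by (simp add: tA_def fA_def TL_Node)
lemma tH_Node: "tH (Node cs) = (if cs = [] then 0 else fH cs)"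
  by (simp add: tH_def fH_def TL_Node)
lemma tW_Node: "tW (Node cs) = (if cs = [] then 0 else fW cs)"
  by (simp add: tW_def fW_def TL_Node pdist_self)
lemma fA_Nil: "fA [] = 0" by (simp add: fA_def FL_Nil)
lemma fH_Nil: "fH [] = 0" by (simp add: fH_def FL_Nil)
lemma fW_Nil: "fW [] = 0" by (simp add: fW_def FL_Nil)

lemma inj_Cons0: "inj_on (Cons (0::nat)) A" by (auto simp: inj_on_def)

lemma sumA: "(\<Sum>p\<in>Cons 0 ` TL t. f p) = (\<Sum>p\<in>TL t. f (0#p))"
  by (simp add: sum.reindex[OF inj_Cons0] o_def)
lemma sumB: "(\<Sum>p\<in>sh ` FL ts. f p) = (\<Sum>p\<in>FL ts. f (sh p))"
  by (simp add: sum.reindex[OF inj_sh] o_def)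

lemma sumU: "(\<Sum>p\<in>FL (t#ts). f p) = (\<Sum>p\<in>TL t. f (0#p)) + (\<Sum>p\<in>FL ts. f (sh p))"
  unfolding FL_Cons
  by (subst sum.union_disjoint) (auto simp: finite_TL finite_FL disj sumA sumB)

lemma sum_Suc': "finite A \<Longrightarrow> (\<Sum>p\<in>A. Suc (f p)) = (\<Sum>p\<in>A. f p) + card A"
  unfolding Suc_eq_plus1 sum.distrib by simp

lemma sum_sum_add: "(\<Sum>p\<in>A. \<Sum>q\<in>B. (c p + f q)::nat) = card B * (\<Sum>p\<in>A. c p) + card A * (\<Sum>q\<in>B. f q)"
  by (simp add: sum.distrib sum_distrib_left mult.commute)

lemma fA_Cons: "fA (t#ts) = tA t + fA ts"
  using sumU[of "\<lambda>_. 1::nat" t ts] by (simp add: fA_def tA_def)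

lemma fH_Cons: "fH (t#ts) = tH t + tA t + fH ts"
proof -
  have "fH (t#ts) = (\<Sum>p\<in>TL t. Suc (length p)) + (\<Sum>p\<in>FL ts. length (sh p))"
    unfolding fH_def sumU by simp
  also have "(\<Sum>p\<in>FL ts. length (sh p)) = fH ts"
    unfolding fH_def by (intro sum.cong) (auto simp: length_sh FL_nonempty)
  finally show ?thesis by (simp add: tH_def tA_def sum_Suc' finite_TL)
qed

lemma fW_Cons: "fW (t#ts) = tW t + fW ts + 2*((tH t + tA t)*fA ts + tA t*fH ts)"
proof -
  have cross: "(\<Sum>p\<in>TL t. \<Sum>q\<in>FL ts. Suc (length p) + length q) = (tH t + tA t)*fA ts + tA t*fH ts"
    unfolding sum_sum_add by (simp add: sum_Suc' finite_TL tH_def tA_def fA_def fH_def algebra_simps)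
  have "fW (t#ts) = (\<Sum>p\<in>TL t. (\<Sum>q\<in>TL t. pdist (0#p) (0#q)) + (\<Sum>q\<in>FL ts. pdist (0#p) (sh q)))
     + (\<Sum>p\<in>FL ts. (\<Sum>q\<in>TL t. pdist (sh p) (0#q)) + (\<Sum>q\<in>FL ts. pdist (sh p) (sh q)))"
    unfolding fW_def sumU ..
  also have "\<dots> = (\<Sum>p\<in>TL t. (\<Sum>q\<in>TL t. pdist p q) + (\<Sum>q\<in>FL ts. Suc (length p) + length q))
     + (\<Sum>p\<in>FL ts. (\<Sum>q\<in>TL t. Suc (length q) + length p) + (\<Sum>q\<in>FL ts. pdist p q))"
    by (intro arg_cong2[where f="(+)"] sum.cong refl)
       (auto simp: pd1 pd2 pd3 pd4 length_sh FL_nonempty)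
  also have "\<dots> = tW t + (\<Sum>p\<in>TL t. \<Sum>q\<in>FL ts. Suc (length p) + length q)
       + (\<Sum>p\<in>FL ts. \<Sum>q\<in>TL t. Suc (length q) + length p) + fW ts"
    unfolding sum.distrib tW_def fW_def by (simp only: ac_simps)
  also have "(\<Sum>p\<in>FL ts. \<Sum>q\<in>TL t. Suc (length q) + length p)
      = (\<Sum>p\<in>TL t. \<Sum>q\<in>FL ts. Suc (length p) + length q)"
    by (rule sum.swap)
  finally show ?thesis using cross by simp
qed



lemma Tg_add: "Tg (\<lambda>x. f x + g x) = Tg f + Tg g"
  by (rule fps_ext) (simp add: Tg_def sum.distrib)

definition "GT = Tg (\<lambda>_. 1)"
definition "GF = Fg (\<lambda>_. 1)"
definition "GTA = Tg (\<lambda>t. real (tA t))"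
definition "GFA = Fg (\<lambda>t. real (fA t))"
definition "GTQ = Tg (\<lambda>t. real (tA t)^2)"
definition "GFQ = Fg (\<lambda>t. real (fA t)^2)"
definition "GTH = Tg (\<lambda>t. real (tH t))"
definition "GFH = Fg (\<lambda>t. real (fH t))"
definition "GTW = Tg (\<lambda>t. real (tW t))"
definition "GFW = Fg (\<lambda>t. real (fW t))"

lemma E1: "GT = fps_X * GF" unfolding GT_def GF_def by (rule Tg_Node)

lemma E2: "GF = 1 + GT * GF"
proof -
  have eq: "(\<lambda>fs::ptree list. 1::real) = (\<lambda>fs. case fs of [] \<Rightarrow> 1 | t#ts \<Rightarrow> 1 * 1)"
    by (rule ext) (simp split: list.split)
  have "Fg (\<lambda>fs::ptree list. 1::real) = Fg (\<lambda>fs. case fs of [] \<Rightarrow> 1 | t#ts \<Rightarrow> 1 * 1)"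
    using eq by (rule arg_cong)
  also have "\<dots> = fps_const 1 + Tg (\<lambda>_. 1) * Fg (\<lambda>_. 1)" by (rule Fg_conv)
  finally show ?thesis unfolding GT_def GF_def by simp
qed

lemma E3: "GTA = fps_X + fps_X * GFA"
proof -
  have eq: "(\<lambda>cs. real (tA (Node cs))) = (\<lambda>cs. (if cs = [] then 1 else 0) + real (fA cs))"
    by (rule ext) (simp add: tA_Node fA_Nil)
  have "GTA = fps_X * Fg (\<lambda>cs. real (tA (Node cs)))" unfolding GTA_def by (rule Tg_Node)
  also have "\<dots> = fps_X * Fg (\<lambda>cs. (if cs = [] then 1 else 0) + real (fA cs))" by (simp only: eq)
  also have "\<dots> = fps_X * (fps_const 1 + GFA)" unfolding GFA_def by (simp only: Fg_add Fg_nil)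
  finally show ?thesis by (simp add: algebra_simps)
qed

lemma E4: "GFA = GTA * GF + GT * GFA"
proof -
  have eq: "(\<lambda>fs. real (fA fs)) = (\<lambda>fs. (case fs of [] \<Rightarrow> 0 | t#ts \<Rightarrow> real (tA t) * 1)
      + (case fs of [] \<Rightarrow> 0 | t#ts \<Rightarrow> 1 * real (fA ts)))"
    by (rule ext) (simp add: fA_Nil fA_Cons split: list.split)
  have "GFA = Fg (\<lambda>fs. (case fs of [] \<Rightarrow> 0 | t#ts \<Rightarrow> real (tA t) * 1)
      + (case fs of [] \<Rightarrow> 0 | t#ts \<Rightarrow> 1 * real (fA ts)))" unfolding GFA_def using eq by (rule arg_cong)
  also have "\<dots> = (fps_const 0 + GTA * GF) + (fps_const 0 + GT * GFA)"
    unfolding GTA_def GFA_def GT_def GF_def by (simp only: Fg_add Fg_conv)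
  finally show ?thesis by simp
qed

lemma E5: "GTQ = fps_X + fps_X * GFQ"
proof -
  have eq: "(\<lambda>cs. real (tA (Node cs))^2) = (\<lambda>cs. (if cs = [] then 1 else 0) + real (fA cs)^2)"
    by (rule ext) (simp add: tA_Node fA_Nil)
  have "GTQ = fps_X * Fg (\<lambda>cs. real (tA (Node cs))^2)" unfolding GTQ_def by (rule Tg_Node)
  also have "\<dots> = fps_X * Fg (\<lambda>cs. (if cs = [] then 1 else 0) + real (fA cs)^2)" by (simp only: eq)
  also have "\<dots> = fps_X * (fps_const 1 + GFQ)" unfolding GFQ_def by (simp only: Fg_add Fg_nil)
  finally show ?thesis by (simp add: algebra_simps)
qed

lemma E6: "GFQ = GTQ * GF + GT * GFQ + 2 * (GTA * GFA)"
proof -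
  have eq: "(\<lambda>fs. real (fA fs)^2) = (\<lambda>fs. (case fs of [] \<Rightarrow> 0 | t#ts \<Rightarrow> real (tA t)^2 * 1)
      + (case fs of [] \<Rightarrow> 0 | t#ts \<Rightarrow> 1 * real (fA ts)^2)
      + 2 * (case fs of [] \<Rightarrow> 0 | t#ts \<Rightarrow> real (tA t) * real (fA ts)))"
    by (rule ext) (simp add: fA_Nil fA_Cons power2_eq_square algebra_simps split: list.split)
  have "GFQ = Fg (\<lambda>fs. (case fs of [] \<Rightarrow> 0 | t#ts \<Rightarrow> real (tA t)^2 * 1)
      + (case fs of [] \<Rightarrow> 0 | t#ts \<Rightarrow> 1 * real (fA ts)^2)
      + 2 * (case fs of [] \<Rightarrow> 0 | t#ts \<Rightarrow> real (tA t) * real (fA ts)))"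
    unfolding GFQ_def using eq by (rule arg_cong)
  also have "\<dots> = (fps_const 0 + GTQ * GF) + (fps_const 0 + GT * GFQ) + fps_const 2 * (fps_const 0 + GTA * GFA)"
    unfolding GTA_def GFA_def GT_def GF_def GTQ_def GFQ_def by (simp only: Fg_add Fg_conv Fg_cmult)
  finally show ?thesis by (simp add: numeral_fps_const)
qed

lemma E7: "GTH = fps_X * GFH"
proof -
  have eq: "(\<lambda>cs. real (tH (Node cs))) = (\<lambda>cs. real (fH cs))"
    by (rule ext) (simp add: tH_Node fH_Nil)
  have "GTH = fps_X * Fg (\<lambda>cs. real (tH (Node cs)))" unfolding GTH_def by (rule Tg_Node)
  also have "\<dots> = fps_X * GFH" unfolding GFH_def by (simp only: eq)
  finally show ?thesis .
qed

lemma E8: "GFH = (GTH + GTA) * GF + GT * GFH"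
proof -
  have eq: "(\<lambda>fs. real (fH fs)) = (\<lambda>fs. (case fs of [] \<Rightarrow> 0 | t#ts \<Rightarrow> (real (tH t) + real (tA t)) * 1)
      + (case fs of [] \<Rightarrow> 0 | t#ts \<Rightarrow> 1 * real (fH ts)))"
    by (rule ext) (simp add: fH_Nil fH_Cons split: list.split)
  have "GFH = Fg (\<lambda>fs. (case fs of [] \<Rightarrow> 0 | t#ts \<Rightarrow> (real (tH t) + real (tA t)) * 1)
      + (case fs of [] \<Rightarrow> 0 | t#ts \<Rightarrow> 1 * real (fH ts)))" unfolding GFH_def using eq by (rule arg_cong)
  also have "\<dots> = (fps_const 0 + (GTH + GTA) * GF) + (fps_const 0 + GT * GFH)"
    unfolding GTA_def GTH_def GFH_def GT_def GF_def by (simp only: Fg_add Fg_conv Tg_add)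
  finally show ?thesis by simp
qed

lemma E9: "GTW = fps_X * GFW"
proof -
  have eq: "(\<lambda>cs. real (tW (Node cs))) = (\<lambda>cs. real (fW cs))"
    by (rule ext) (simp add: tW_Node fW_Nil)
  have "GTW = fps_X * Fg (\<lambda>cs. real (tW (Node cs)))" unfolding GTW_def by (rule Tg_Node)
  also have "\<dots> = fps_X * GFW" unfolding GFW_def by (simp only: eq)
  finally show ?thesis .
qed

lemma E10: "GFW = GTW * GF + GT * GFW + 2 * ((GTH + GTA) * GFA + GTA * GFH)"
proof -
  have eq: "(\<lambda>fs. real (fW fs)) = (\<lambda>fs. (case fs of [] \<Rightarrow> 0 | t#ts \<Rightarrow> real (tW t) * 1)
      + (case fs of [] \<Rightarrow> 0 | t#ts \<Rightarrow> 1 * real (fW ts))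
      + 2 * ((case fs of [] \<Rightarrow> 0 | t#ts \<Rightarrow> (real (tH t) + real (tA t)) * real (fA ts))
           + (case fs of [] \<Rightarrow> 0 | t#ts \<Rightarrow> real (tA t) * real (fH ts))))"
    by (rule ext) (simp add: fW_Nil fW_Cons algebra_simps split: list.split)
  have "GFW = Fg (\<lambda>fs. (case fs of [] \<Rightarrow> 0 | t#ts \<Rightarrow> real (tW t) * 1)
      + (case fs of [] \<Rightarrow> 0 | t#ts \<Rightarrow> 1 * real (fW ts))
      + 2 * ((case fs of [] \<Rightarrow> 0 | t#ts \<Rightarrow> (real (tH t) + real (tA t)) * real (fA ts))
           + (case fs of [] \<Rightarrow> 0 | t#ts \<Rightarrow> real (tA t) * real (fH ts))))"
    unfolding GFW_def using eq by (rule arg_cong)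
  also have "\<dots> = (fps_const 0 + GTW * GF) + (fps_const 0 + GT * GFW)
      + fps_const 2 * ((fps_const 0 + (GTH + GTA) * GFA) + (fps_const 0 + GTA * GFH))"
    unfolding GTA_def GTH_def GFH_def GT_def GF_def GTW_def GFW_def GFA_def
    by (simp only: Fg_add Fg_conv Tg_add Fg_cmult)
  finally show ?thesis by (simp add: numeral_fps_const)
qed



lemma alg1:
  fixes X T F TA FA TQ FQ :: "'a::{idom,semiring_char_0}"
  assumes e1: "T = X*F" and e2: "F = 1 + T*F" and e3: "TA = X + X*FA" and e4: "FA = TA*F + T*FA"
   and e5: "TQ = X + X*FQ" and e6: "FQ = TQ*F + T*FQ + 2*(TA*FA)"
  shows "(1-2*T)^3*(TQ - TA) = 2*X^3"
proof -
  have d: "F*(1-T) = 1" using arg_cong[OF e2, of "\<lambda>x. x - T*F"] by (simp add: algebra_simps)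
  have a1: "FA*(1-T) = TA*F" using arg_cong[OF e4, of "\<lambda>x. x - T*FA"] by (simp add: algebra_simps)
  have a2: "TA*(1-2*T) = X*(1-T)"
  proof -
    have "TA*(1-T) = X*(1-T) + X*(FA*(1-T))" using arg_cong[OF e3, of "\<lambda>x. x*(1-T)"] by (simp add: algebra_simps)
    also have "X*(FA*(1-T)) = TA*T" using a1 e1 by algebra
    finally show ?thesis by algebra
  qed
  have a3: "FA = TA*F*F"
  proof -
    have "FA = FA*(F*(1-T))" using d by simp
    also have "\<dots> = F*(FA*(1-T))" by (simp add: algebra_simps)
    finally show ?thesis unfolding a1 by (simp add: algebra_simps)
  qed
  have q1: "FQ*(1-T) = TQ*F + 2*(TA*FA)" using arg_cong[OF e6, of "\<lambda>x. x - T*FQ"] by (simp add: algebra_simps)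
  have q2: "TQ*(1-2*T) = X*(1-T) + 2*X*(TA*FA)"
  proof -
    have "TQ*(1-T) = X*(1-T) + X*(FQ*(1-T))" using arg_cong[OF e5, of "\<lambda>x. x*(1-T)"] by (simp add: algebra_simps)
    also have "X*(FQ*(1-T)) = TQ*T + 2*X*(TA*FA)" using q1 e1 by algebra
    finally show ?thesis by algebra
  qed
  have q: "(1-2*T)*(TQ - TA) = 2*X*(TA*FA)" using q2 a2 by algebra
  have a2': "(1-2*T)*TA = X*(1-T)" using a2 by (simp add: mult.commute)
  have "(1-2*T)^3*(TQ - TA) = (1-2*T)^2*((1-2*T)*(TQ - TA))" by algebra
  also have "\<dots> = (1-2*T)^2*(2*X*(TA*FA))" unfolding q ..
  also have "\<dots> = 2*X*((1-2*T)*TA)^2*(F*F)" unfolding a3 by algebra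
  also have "\<dots> = 2*X*(X*(1-T))^2*(F*F)" unfolding a2' ..
  also have "\<dots> = 2*X^3*(F*(1-T))^2" by algebra
  finally show ?thesis unfolding d by simp
qed

lemma alg2:
  fixes X T F TA FA TH FH TW FW :: "'a::{idom,semiring_char_0}"
  assumes e1: "T = X*F" and e2: "F = 1 + T*F" and e3: "TA = X + X*FA" and e4: "FA = TA*F + T*FA"
   and e7: "TH = X*FH" and e8: "FH = (TH+TA)*F + T*FH" and e9: "TW = X*FW"
   and e10: "FW = TW*F + T*FW + 2*((TH+TA)*FA + TA*FH)"
  shows "(1-2*T)^4*TW = 2*X^3 + 2*X^3*(1-2*T)"
proof -
  have d: "F*(1-T) = 1" using arg_cong[OF e2, of "\<lambda>x. x - T*F"] by (simp add: algebra_simps)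
  have a1: "FA*(1-T) = TA*F" using arg_cong[OF e4, of "\<lambda>x. x - T*FA"] by (simp add: algebra_simps)
  have a2: "TA*(1-2*T) = X*(1-T)"
  proof -
    have "TA*(1-T) = X*(1-T) + X*(FA*(1-T))" using arg_cong[OF e3, of "\<lambda>x. x*(1-T)"] by (simp add: algebra_simps)
    also have "X*(FA*(1-T)) = TA*T" using a1 e1 by algebra
    finally show ?thesis by algebra
  qed
  have a3: "FA = TA*F*F"
  proof -
    have "FA = FA*(F*(1-T))" using d by simp
    also have "\<dots> = F*(FA*(1-T))" by (simp add: algebra_simps)
    finally show ?thesis unfolding a1 by (simp add: algebra_simps)
  qed
  have h1: "FH*(1-T) = (TH+TA)*F" using arg_cong[OF e8, of "\<lambda>x. x - T*FH"] by (simp add: algebra_simps)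
  have h3: "FH = (TH+TA)*F*F"
  proof -
    have "FH = FH*(F*(1-T))" using d by simp
    also have "\<dots> = F*(FH*(1-T))" by (simp add: algebra_simps)
    finally show ?thesis unfolding h1 by (simp add: algebra_simps)
  qed
  have h2: "(TH+TA)*(1-2*T) = TA*(1-T)"
  proof -
    have "TH*(1-T) = X*(FH*(1-T))" unfolding e7 by (simp add: algebra_simps)
    also have "\<dots> = T*(TH+TA)" using h1 e1 by algebra
    finally show ?thesis by algebra
  qed
  have w1: "FW*(1-T) = TW*F + 2*((TH+TA)*FA + TA*FH)" using arg_cong[OF e10, of "\<lambda>x. x - T*FW"] by (simp add: algebra_simps)
  have R: "(TH+TA)*FA + TA*FH = 2*TA*(TH+TA)*(F*F)" unfolding a3 h3 by algebra
  have w2: "TW*(1-2*T) = 2*X*(2*TA*(TH+TA)*(F*F))"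
  proof -
    have "TW*(1-T) = X*(FW*(1-T))" unfolding e9 by (simp add: algebra_simps)
    also have "\<dots> = T*TW + 2*X*((TH+TA)*FA + TA*FH)" using w1 e1 by algebra
    finally show ?thesis unfolding R by algebra
  qed
  have a2': "(1-2*T)*TA = X*(1-T)" using a2 by (simp add: mult.commute)
  have "(1-2*T)^4*TW = (1-2*T)^3*(TW*(1-2*T))" by algebra
  also have "\<dots> = (1-2*T)^3*(2*X*(2*TA*(TH+TA)*(F*F)))" unfolding w2 ..
  also have "\<dots> = 4*X*((1-2*T)*TA)*((TH+TA)*(1-2*T))*(1-2*T)*(F*F)" by algebra
  also have "\<dots> = 4*X*(X*(1-T))*(TA*(1-T))*(1-2*T)*(F*F)" unfolding a2' h2 ..
  also have "\<dots> = 4*X*(X*(1-T))*((1-2*T)*TA)*(1-T)*(F*F)" by algebra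
  also have "\<dots> = 4*X*(X*(1-T))*(X*(1-T))*(1-T)*(F*F)" unfolding a2' ..
  also have "\<dots> = 4*X^3*(1-T)*(F*(1-T))^2" by algebra
  also have "\<dots> = 4*X^3*(1-T)" unfolding d by simp
  also have "\<dots> = 2*X^3 + 2*X^3*(1-2*T)" by (simp add: algebra_simps)
  finally show ?thesis .
qed


lemma cb_nat: "Suc n * (2*Suc n choose Suc n) = (4*n+2) * (2*n choose n)"
proof -
  have 1: "Suc n * (Suc (Suc (2*n)) choose Suc n) = Suc (Suc (2*n)) * (Suc (2*n) choose n)"
    by (rule Suc_times_binomial)
  have 2: "(Suc (2*n) choose n) * Suc n = Suc (2*n) * (2*n choose n)"
  proof -
    have "Suc (2*n) * (2*n choose n) = (Suc (2*n) choose Suc n) * Suc n"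
      by (rule Suc_times_binomial_eq)
    moreover have "(Suc (2*n) choose Suc n) = (Suc (2*n) choose n)"
      using binomial_symmetric[of "Suc n" "Suc (2*n)"] by simp
    ultimately show ?thesis by metis
  qed
  have e: "2*Suc n = Suc (Suc (2*n))" by simp
  have "Suc n * (Suc n * (2*Suc n choose Suc n)) = Suc n * ((4*n+2) * (2*n choose n))"
  proof -
    have "Suc n * (Suc n * (2*Suc n choose Suc n)) = Suc n * (Suc (Suc (2*n)) * (Suc (2*n) choose n))"
      using 1 by (simp only: e)
    also have "\<dots> = Suc (Suc (2*n)) * ((Suc (2*n) choose n) * Suc n)" by (simp only: ac_simps)
    also have "\<dots> = Suc (Suc (2*n)) * (Suc (2*n) * (2*n choose n))" using 2 by (simp only:)
    also have "\<dots> = Suc n * ((4*n+2) * (2*n choose n))" by (simp only: mult.assoc[symmetric]) (simp add: algebra_simps del: binomial_Suc_Suc)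
    finally show ?thesis .
  qed
  then show ?thesis by (metis Suc_neq_Zero mult_left_cancel)
qed

lemma cb: "real (Suc n) * real (2*Suc n choose Suc n) = (4*real n+2) * real (2*n choose n)"
proof -
  have "real (Suc n * (2*Suc n choose Suc n)) = real ((4*n+2) * (2*n choose n))"
    by (simp only: cb_nat)
  then show ?thesis by (simp only: of_nat_mult of_nat_add of_nat_numeral)
qed

definition "Cc = Abs_fps (\<lambda>n. real (2*n choose n))"
definition "Pc = Abs_fps (\<lambda>n. real (2*n+1) * real (2*n choose n))"
definition "Gc = Abs_fps (\<lambda>n. (4::real)^n)"

abbreviation "Lf \<equiv> (1 - fps_const (4::real) * fps_X)"

lemma lin: "fps_nth (f * Lf) n = fps_nth f n - (if n = 0 then 0 else 4 * fps_nth f (n-1))"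
proof -
  have "f * Lf = f - fps_const 4 * (fps_X * f)" by (simp add: algebra_simps)
  then show ?thesis by simp
qed

lemma C_deriv: "fps_deriv Cc * Lf = fps_const 2 * Cc"
proof (rule fps_ext)
  fix n
  show "fps_nth (fps_deriv Cc * Lf) n = fps_nth (fps_const 2 * Cc) n"
  proof (cases n)
    case 0 then show ?thesis by (simp add: lin Cc_def)
  next
    case (Suc m)
    have "real (Suc (Suc m)) * real (2*Suc (Suc m) choose Suc (Suc m)) = (4*real (Suc m)+2) * real (2*Suc m choose Suc m)"
      by (rule cb)
    then show ?thesis using Suc by (simp add: lin Cc_def algebra_simps del: binomial_Suc_Suc)
  qed
qed

lemma C_sq: "Cc * Cc * Lf = 1"
proof -
  have "fps_deriv (Cc * Cc * Lf) = 2 * Cc * (fps_deriv Cc * Lf) - fps_const 4 * (Cc * Cc)"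
    by (simp add: algebra_simps)
  also have "\<dots> = 0"
  proof -
    have t: "(2::real fps) = fps_const 2" by (simp add: numeral_fps_const)
    have "2 * Cc * (fps_const 2 * Cc) = (fps_const 2 * fps_const 2) * (Cc * Cc)"
      unfolding t by (simp only: ac_simps)
    also have "fps_const 2 * fps_const 2 = fps_const (4::real)" by (simp only: fps_const_mult) simp
    finally show ?thesis unfolding C_deriv by simp
  qed
  finally have "Cc * Cc * Lf = fps_const (fps_nth (Cc * Cc * Lf) 0)" by (rule fps_deriv_eq_0_iff[THEN iffD1])
  also have "\<dots> = 1" by (simp add: Cc_def)
  finally show ?thesis .
qed

lemma P_lin: "Pc * Lf = Cc"
proof (rule fps_ext)
  fix n
  show "fps_nth (Pc * Lf) n = fps_nth Cc n"
  proof (cases n)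
    case 0 then show ?thesis by (simp add: lin Cc_def Pc_def)
  next
    case (Suc m)
    have "real (Suc m) * real (2*Suc m choose Suc m) = (4*real m+2) * real (2*m choose m)"
      by (rule cb)
    then show ?thesis using Suc by (simp add: lin Cc_def Pc_def algebra_simps del: binomial_Suc_Suc)
  qed
qed

lemma G_lin: "Gc * Lf = 1"
proof (rule fps_ext)
  fix n
  show "fps_nth (Gc * Lf) n = fps_nth 1 n"
    by (cases n) (simp_all add: lin Gc_def)
qed

lemma C3: "Cc^3 = Pc"
proof -
  have "Pc = Pc * (Cc * Cc * Lf)" by (simp add: C_sq)
  also have "\<dots> = Cc * Cc * (Pc * Lf)" by (simp only: ac_simps)
  also have "\<dots> = Cc^3" by (simp add: P_lin power3_eq_cube)
  finally show ?thesis ..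
qed

lemma C4: "Cc^4 = Gc * Gc"
proof -
  have "Gc * Gc = Gc * Gc * (Cc * Cc * Lf) * (Cc * Cc * Lf)" by (simp add: C_sq)
  also have "\<dots> = Cc^4 * (Gc * Lf) * (Gc * Lf)" by (simp add: algebra_simps power4_eq_xxxx)
  also have "\<dots> = Cc^4" by (simp add: G_lin)
  finally show ?thesis ..
qed

lemma GG_nth: "fps_nth (Gc * Gc) m = real (Suc m) * 4^m"
proof -
  have "fps_nth (Gc * Gc) m = (\<Sum>i=0..m. (4::real)^i * 4^(m-i))" by (simp add: fps_mult_nth Gc_def)
  also have "\<dots> = (\<Sum>i=0..m. (4::real)^m)"
    by (intro sum.cong refl) (simp flip: power_add)
  finally show ?thesis by simp
qed



lemma pair_dist_eq: "pair_dist {p, q} = pdist p q"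
  unfolding pair_dist_def
proof (rule the_equality)
  show "\<exists>p' q'. {p, q} = {p', q'} \<and> pdist p q = pdist p' q'" by blast
next
  fix d assume "\<exists>p' q'. {p, q} = {p', q'} \<and> d = pdist p' q'"
  then obtain p' q' where "{p, q} = {p', q'}" "d = pdist p' q'" by blast
  then show "d = pdist p q" by (auto simp: doubleton_eq_iff pdist_sym)
qed

lemma leaf_pairs_sum:
  fixes g :: "nat list set \<Rightarrow> real"
  shows "2 * (\<Sum>(T,L)\<in>leaf_pairs n. g L) =
    (\<Sum>T\<in>trees n. \<Sum>p\<in>TL T. \<Sum>q\<in>TL T. if p = q then 0 else g {p,q})"
proof -
  define OP where "OP = (SIGMA T:trees n. {(p,q). p \<in> TL T \<and> q \<in> TL T \<and> p \<noteq> q})"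
  define h where "h = (\<lambda>(T::ptree, (p::nat list, q::nat list)). (T, {p,q}))"
  have finOP: "finite OP" unfolding OP_def
    by (rule finite_SigmaI[OF finite_trees]) (rule finite_subset[of _ "TL _ \<times> TL _"], auto simp: finite_TL)
  have img: "leaf_pairs n = h ` OP"
    unfolding leaf_pairs_def OP_def h_def trees_def TL_def by (auto simp: image_iff) blast
  have fib: "{x \<in> OP. h x = y} = {(fst y, (p, q)), (fst y, (q, p))}" if "y = h (T, (p, q))" "(T, (p, q)) \<in> OP" for y T p q
    using that unfolding h_def OP_def by (auto simp: doubleton_eq_iff)
  have "(\<Sum>x\<in>OP. g (snd (h x))) = (\<Sum>y\<in>h ` OP. \<Sum>x\<in>{x \<in> OP. h x = y}. g (snd (h x)))"
    by (rule sum.image_gen[OF finOP])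
  also have "\<dots> = (\<Sum>y\<in>h ` OP. 2 * g (snd y))"
  proof (rule sum.cong[OF refl])
    fix y assume "y \<in> h ` OP"
    then obtain T p q where y: "y = h (T, (p, q))" "(T, (p, q)) \<in> OP" by auto
    then have pq: "p \<noteq> q" by (auto simp: OP_def)
    have "(\<Sum>x\<in>{x \<in> OP. h x = y}. g (snd (h x))) = (\<Sum>x\<in>{x \<in> OP. h x = y}. g (snd y))"
      by (intro sum.cong) auto
    also have "\<dots> = 2 * g (snd y)" unfolding fib[OF y] using pq by simp
    finally show "(\<Sum>x\<in>{x \<in> OP. h x = y}. g (snd (h x))) = 2 * g (snd y)" .
  qed
  also have "\<dots> = 2 * (\<Sum>(T,L)\<in>leaf_pairs n. g L)"
    unfolding img by (simp add: sum_distrib_left split_def)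
  finally have 1: "2 * (\<Sum>(T,L)\<in>leaf_pairs n. g L) = (\<Sum>x\<in>OP. g (snd (h x)))" ..
  have fS: "\<forall>T\<in>trees n. finite {(p,q). p \<in> TL T \<and> q \<in> TL T \<and> p \<noteq> q}"
    by (auto intro: finite_subset[of _ "TL _ \<times> TL _"] simp: finite_TL)
  have "(\<Sum>x\<in>OP. g (snd (h x))) = (\<Sum>(T,pq)\<in>OP. g {fst pq, snd pq})"
    by (intro sum.cong) (auto simp: h_def)
  also have "\<dots> = (\<Sum>T\<in>trees n. \<Sum>pq\<in>{(p,q). p \<in> TL T \<and> q \<in> TL T \<and> p \<noteq> q}. g {fst pq, snd pq})"
    unfolding OP_def by (rule sum.Sigma[symmetric, OF finite_trees fS])
  also have "\<dots> = (\<Sum>T\<in>trees n. \<Sum>(p,q)\<in>{(p,q). p \<in> TL T \<and> q \<in> TL T \<and> p \<noteq> q}. g {p,q})"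
    by (simp add: split_def)
  also have "\<dots> = (\<Sum>T\<in>trees n. \<Sum>p\<in>TL T. \<Sum>q\<in>TL T. if p = q then 0 else g {p,q})"
  proof (rule sum.cong[OF refl])
    fix T
    have "{(p,q). p \<in> TL T \<and> q \<in> TL T \<and> p \<noteq> q} = {x \<in> TL T \<times> TL T. fst x \<noteq> snd x}" by auto
    then have "(\<Sum>(p,q)\<in>{(p,q). p \<in> TL T \<and> q \<in> TL T \<and> p \<noteq> q}. g {p,q})
        = (\<Sum>x\<in>TL T \<times> TL T. if fst x \<noteq> snd x then g {fst x, snd x} else 0)"
      by (simp add: sum.inter_filter finite_TL split_def)
    also have "\<dots> = (\<Sum>p\<in>TL T. \<Sum>q\<in>TL T. if p = q then 0 else g {p,q})"
      unfolding sum.cartesian_product by (intro sum.cong) auto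
    finally show "(\<Sum>(p,q)\<in>{(p,q). p \<in> TL T \<and> q \<in> TL T \<and> p \<noteq> q}. g {p,q})
        = (\<Sum>p\<in>TL T. \<Sum>q\<in>TL T. if p = q then 0 else g {p,q})" .
  qed
  finally show ?thesis using 1 by simp
qed



lemma offdiag_count:
  assumes "finite S"
  shows "(\<Sum>p\<in>S. \<Sum>q\<in>S. if p = q then 0 else (1::real)) = real (card S)^2 - real (card S)"
proof -
  have "(\<Sum>q\<in>S. if p = q then 0 else (1::real)) = real (card S) - 1" if "p \<in> S" for p
  proof -
    have "(\<Sum>q\<in>S. if p = q then 0 else (1::real)) = (\<Sum>q\<in>S. 1 - (if p = q then 1 else 0))"
      by (intro sum.cong) auto
    also have "\<dots> = real (card S) - 1" using assms that by (simp add: sum_subtractf)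
    finally show ?thesis .
  qed
  then have "(\<Sum>p\<in>S. \<Sum>q\<in>S. if p = q then 0 else (1::real)) = (\<Sum>p\<in>S. real (card S) - 1)"
    by (intro sum.cong) auto
  also have "\<dots> = real (card S)^2 - real (card S)" by (simp add: power2_eq_square algebra_simps)
  finally show ?thesis .
qed

lemma T2: "GT = fps_X + GT * GT"
proof -
  have "GT = fps_X * (1 + GT * GF)" using E1 E2 by simp
  also have "\<dots> = fps_X + GT * (fps_X * GF)" by (simp add: algebra_simps)
  finally show ?thesis using E1 by simp
qed

lemma sC: "(1 - 2*GT) * Cc = 1"
proof -
  have four: "(4::real fps) = fps_const 4" by (simp add: numeral_fps_const)
  have s2: "(1 - 2*GT)^2 = Lf"
  proof -
    have "(1 - 2*GT)^2 = 1 - 4*(GT - GT*GT)" by (simp add: power2_eq_square algebra_simps)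
    also have "GT - GT*GT = fps_X" using T2 by (simp add: algebra_simps)
    finally show ?thesis unfolding four .
  qed
  have "((1 - 2*GT) * Cc)^2 = (1 - 2*GT)^2 * (Cc * Cc)" by (simp add: power2_eq_square algebra_simps)
  also have "\<dots> = Cc * Cc * Lf" unfolding s2 by (simp add: algebra_simps)
  also have "\<dots> = 1" by (rule C_sq)
  finally have "(1 - 2*GT) * Cc = 1 \<or> (1 - 2*GT) * Cc = -1" by (simp add: power2_eq_1_iff)
  moreover have h0: "fps_nth ((1 - 2*GT) * Cc) 0 = 1"
    by (simp add: Cc_def GT_def Tg_0)
  moreover have "(1 - 2*GT) * Cc \<noteq> -1"
  proof
    assume "(1 - 2*GT) * Cc = -1"
    then have "fps_nth ((1 - 2*GT) * Cc) 0 = fps_nth (-1) 0" by (rule arg_cong)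
    then show False unfolding h0 by simp
  qed
  ultimately show ?thesis by blast
qed

lemma Q: "GTQ - GTA = 2 * fps_X^3 * Pc"
proof -
  have "GTQ - GTA = ((1 - 2*GT) * Cc)^3 * (GTQ - GTA)" by (simp add: sC)
  also have "\<dots> = Cc^3 * ((1 - 2*GT)^3 * (GTQ - GTA))" by (simp only: power_mult_distrib ac_simps)
  also have "(1 - 2*GT)^3 * (GTQ - GTA) = 2 * fps_X^3"
    by (rule alg1[OF E1 E2 E3 E4 E5 E6])
  finally show ?thesis by (simp add: C3 algebra_simps)
qed

lemma W: "GTW = 2 * fps_X^3 * (Gc * Gc) + 2 * fps_X^3 * Pc"
proof -
  have "GTW = ((1 - 2*GT) * Cc)^4 * GTW" by (simp add: sC)
  also have "\<dots> = Cc^4 * ((1 - 2*GT)^4 * GTW)" by (simp only: power_mult_distrib ac_simps)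
  also have "(1 - 2*GT)^4 * GTW = 2 * fps_X^3 + 2 * fps_X^3 * (1 - 2*GT)"
    by (rule alg2[OF E1 E2 E3 E4 E7 E8 E9 E10])
  also have "Cc^4 * (2 * fps_X^3 + 2 * fps_X^3 * (1 - 2*GT)) =
      2 * fps_X^3 * Cc^4 + 2 * fps_X^3 * (((1 - 2*GT) * Cc) * Cc^3)"
    by algebra
  finally show ?thesis by (simp add: sC C3 C4)
qed

lemma nth_2X3: "n \<ge> 3 \<Longrightarrow> fps_nth (2 * fps_X^3 * f) n = 2 * fps_nth (f::real fps) (n - 3)"
proof -
  assume "n \<ge> 3"
  have t: "(2::real fps) = fps_const 2" by (simp add: numeral_fps_const)
  have eq: "2 * fps_X^3 * f = fps_const 2 * (fps_X^3 * f)" unfolding t by (simp only: mult.assoc)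
  have "fps_nth (2 * fps_X^3 * f) n = fps_nth (fps_const 2 * (fps_X^3 * f)) n" unfolding eq ..
  also have "\<dots> = 2 * fps_nth (fps_X^3 * f) n" by (rule fps_mult_left_const_nth)
  also have "\<dots> = 2 * fps_nth f (n - 3)" using \<open>n \<ge> 3\<close> by (simp add: fps_X_power_mult_nth)
  finally show ?thesis .
qed

theorem proposition3p4:
  fixes n :: nat
  assumes "n \<ge> 3"
  shows "real (card (leaf_pairs n)) = fact (2*n - 5) / (fact (n - 3))^2
    \<and> real (\<Sum>(T, L)\<in>leaf_pairs n. pair_dist L)
        = real (n - 2) * 4 ^ (n - 3) + fact (2*n - 5) / (fact (n - 3))^2"
proof -
  obtain m where n: "n = m + 3" using assms by (metis add.commute le_Suc_ex)
  have bin: "real (2*m+1) * real (2*m choose m) = fact (2*n - 5) / (fact (n - 3))^2"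
  proof -
    have "real (2*m choose m) = fact (2*m) / (fact m * fact m)"
      using binomial_fact[of m "2*m"] by simp
    moreover have "fact (2*n - 5) = (real (2*m+1) * fact (2*m) :: real)"
      using n by (simp add: fact_Suc)
    ultimately show ?thesis using n by (simp add: power2_eq_square)
  qed
  have Pm: "fps_nth Pc m = real (2*m+1) * real (2*m choose m)" by (simp add: Pc_def)
  have card1: "2 * real (card (leaf_pairs n)) = fps_nth (GTQ - GTA) n"
  proof -
    have "2 * real (card (leaf_pairs n)) = 2 * (\<Sum>(T,L)\<in>leaf_pairs n. (\<lambda>_. 1::real) L)"
      by (simp add: split_def)
    also have "\<dots> = (\<Sum>T\<in>trees n. \<Sum>p\<in>TL T. \<Sum>q\<in>TL T. if p = q then 0 else (1::real))"
      by (rule leaf_pairs_sum)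
    also have "\<dots> = (\<Sum>T\<in>trees n. real (tA T)^2 - real (tA T))"
      by (intro sum.cong refl) (simp add: offdiag_count finite_TL tA_def)
    also have "\<dots> = fps_nth (GTQ - GTA) n"
      by (simp add: GTQ_def GTA_def Tg_def sum_subtractf)
    finally show ?thesis .
  qed
  have sum1: "2 * real (\<Sum>(T, L)\<in>leaf_pairs n. pair_dist L) = fps_nth GTW n"
  proof -
    have "real (\<Sum>(T, L)\<in>leaf_pairs n. pair_dist L) = (\<Sum>(T,L)\<in>leaf_pairs n. (\<lambda>L. real (pair_dist L)) L)"
      by (simp add: split_def)
    then have "2 * real (\<Sum>(T, L)\<in>leaf_pairs n. pair_dist L)
        = (\<Sum>T\<in>trees n. \<Sum>p\<in>TL T. \<Sum>q\<in>TL T. if p = q then 0 else real (pair_dist {p,q}))"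
      by (simp only: leaf_pairs_sum)
    also have "\<dots> = (\<Sum>T\<in>trees n. real (tW T))"
      unfolding tW_def of_nat_sum by (intro sum.cong refl) (auto simp: pair_dist_eq pdist_self)
    also have "\<dots> = fps_nth GTW n" by (simp add: GTW_def Tg_def)
    finally show ?thesis .
  qed
  have c: "real (card (leaf_pairs n)) = fact (2*n - 5) / (fact (n - 3))^2"
    using card1 unfolding Q nth_2X3[OF assms] using n Pm bin by simp
  have s: "real (\<Sum>(T, L)\<in>leaf_pairs n. pair_dist L) = real (n - 2) * 4 ^ (n - 3) + fact (2*n - 5) / (fact (n - 3))^2"
    using sum1 unfolding W fps_add_nth nth_2X3[OF assms] GG_nth using n Pm bin by simp
  show ?thesis using c s by blast
qed

end
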